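(* Let $\tilde\alpha$ be a dual timelike curve and $\tilde\beta$ a dual spacelike curve with dual timelike binormal in the dual Lorentzian space $ID_1^3$ such that $\{\tilde\alpha,\tilde\beta\}$ is a dual timelike - spacelike Mannheim pair, i.e. $\tilde\beta(s^* )=\tilde\alpha(s)+\lambda(s)B(s)$, where $\lambda(s)$ is a dual-number valued function and at corresponding points the dual binormal line of $\tilde\alpha$ coincides with the dual principal normal line of $\tilde\beta$. Then the distance $\|\tilde\beta(s^* )-\tilde\alpha(s)\|$ between corresponding dual points of $\tilde\alpha$ and $\tilde\beta$ is constant.
   Context: Dual numbers: $ID=\{a+\varepsilon a^*: a,a^*\in\mathbb R\}$ with $\varepsilon^2=0$; a differentiable function extends by $f(a+\varepsilon a^* )=f(a)+\varepsilon a^* f'(a)$. $ID^3=\{\vec a+\varepsilon\vec a^*:\vec a,\vec a^*\in\mathbb R^3\}$ with dual Lorentzian inner product $\langle \vec A,\vec B\rangle=\langle\vec a,\vec b\rangle+\varepsilon(\langle\vec a,\vec b^*\rangle+\langle\vec a^*,\vec b\rangle)$, where $\langle\vec a,\vec b\rangle=-a_1b_1+a_2b_2+a_3b_3$; this space is denoted $ID_1^3$. Norm $\|\vec A\|=\sqrt{|\langle\vec A,\vec A\rangle|}=\|\vec a\|+\varepsilon\langle\vec a,\vec a^*\rangle/\|\vec a\|$ for $\vec a\neq0$. $\vec A$ is dual spacelike if $\langle\vec A,\vec A\rangle>0$ or $\vec A=0$, dual timelike if $\langle\vec A,\vec A\rangle<0$. A dual curve $\tilde\alpha=\alpha+\varepsilon\alpha^*$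 is parametrized by dual arc length $s$. For the dual timelike curve $\tilde\alpha$ with Frenet frame $\{T,N,B\}$ ($\langle T,T\rangle=-1$, $\langle N,N\rangle=\langle B,B\rangle=1$, mutually orthogonal): $T'=\kappa N$, $N'=\kappa T+\tau B$, $B'=-\tau N$, with dual curvature $\kappa$ and dual torsion $\tau$. For the dual spacelike curve $\tilde\beta$ with dual timelike binormal, arc length $s^*$, Frenet frame $\{V_1,V_2,V_3\}$ ($\langle V_1,V_1\rangle=\langle V_2,V_2\rangle=1$, $\langle V_3,V_3\rangle=-1$): $V_1'=PV_2$, $V_2'=-PV_1+QV_3$, $V_3'=QV_2$ (derivatives in $s^*$), with dual curvature $P$ and dual torsion $Q$. The pair is a dual timelike - spacelike Mannheim pair if under a correspondence $s\mapsto s^*$ the dual binormal line of $\tilde\alpha$ at $s$ coincides with the dual principal normal line of $\tilde\beta$ at $s^*$ (so $B$ and $V_2$ are linearly dependent). *)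

theory Defs
  imports "HOL-Analysis.Analysis"
begin

text \<open>Dual numbers a + eps a* are modelled as pairs (a, a*) :: real \<times> real;
dual vectors A = a + eps a* in ID^3 as pairs (a, a*) :: (real^3) \<times> (real^3).\<close>

type_synonym dual = "real \<times> real"
type_synonym dvec = "(real^3) \<times> (real^3)"

definition linner :: "real^3 \<Rightarrow> real^3 \<Rightarrow> real" where
  "linner a b = - (a$1 * b$1) + a$2 * b$2 + a$3 * b$3"

definition lnorm :: "real^3 \<Rightarrow> real" where
  "lnorm a = sqrt \<bar>linner a a\<bar>"

text \<open>Dual number multiplication (eps^2 = 0).\<close>
definition dmul :: "dual \<Rightarrow> dual \<Rightarrow> dual" where
  "dmul x y = (fst x * fst y, fst x * snd y + snd x * fst y)"

definition dscale :: "dual \<Rightarrow> dvec \<Rightarrow> dvec" where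
  "dscale x A = (fst x *\<^sub>R fst A, fst x *\<^sub>R snd A + snd x *\<^sub>R fst A)"

definition dinner :: "dvec \<Rightarrow> dvec \<Rightarrow> dual" where
  "dinner A B = (linner (fst A) (fst B), linner (fst A) (snd B) + linner (snd A) (fst B))"

definition dnorm :: "dvec \<Rightarrow> dual" where
  "dnorm A = (lnorm (fst A), linner (fst A) (snd A) / lnorm (fst A))"

text \<open>A dual-valued function of the dual parameter is represented by its restriction
c :: real \<Rightarrow> V \<times> V to real parameter values; it is evaluated at a dual parameter
x = (u, u*) by the extension rule F(u + eps u*) = F(u) + eps u* F'(u), i.e.
real part f(u), dual part f*(u) + u* f'(u).\<close>
definition dext :: "(real \<Rightarrow> 'v::real_normed_vector \<times> 'v) \<Rightarrow> dual \<Rightarrow> 'v \<times> 'v" where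
  "dext c x = (fst (c (fst x)),
               snd (c (fst x)) + snd x *\<^sub>R vector_derivative (\<lambda>u. fst (c u)) (at (fst x)))"

end

theory Submission imports Defs begin

lemma linner_add_left: "linner (a + b) c = linner a c + linner b c"
  and linner_add_right: "linner c (a + b) = linner c a + linner c b"
  and linner_scaleR_left: "linner (r *\<^sub>R a) c = r * linner a c"
  and linner_scaleR_right: "linner c (r *\<^sub>R a) = r * linner c a"
  and linner_minus_left: "linner (- a) c = - linner a c"
  and linner_minus_right: "linner c (- a) = - linner c a"
  and linner_diff_left: "linner (a - b) c = linner a c - linner b c"
  and linner_diff_right: "linner c (a - b) = linner c a - linner c b"
  and linner_zero_left: "linner 0 c = 0"
  and linner_zero_right: "linner c 0 = 0"
  and linner_commute: "linner a c = linner c a"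
  by (simp_all add: linner_def algebra_simps)

lemmas linner_simps = linner_add_left linner_add_right linner_scaleR_left linner_scaleR_right
  linner_minus_left linner_minus_right linner_diff_left linner_diff_right linner_zero_left linner_zero_right

lemma bilinear_dinner: "bilinear dinner"
  unfolding bilinear_def
  by (auto intro!: linearI simp: dinner_def linner_simps algebra_simps)

lemma bb_dinner: "bounded_bilinear dinner"
  using bilinear_dinner bilinear_conv_bounded_bilinear by blast

lemma dinner_dscale_left: "dinner (dscale a X) Y = dmul a (dinner X Y)"
  and dinner_dscale_right: "dinner X (dscale a Y) = dmul a (dinner X Y)"
  and dinner_minus_right: "dinner X (- Y) = - dinner X Y"
  and dinner_diff_left: "dinner (X - Y) Z = dinner X Z - dinner Y Z"
  by (auto simp: dinner_def dscale_def dmul_def linner_simps algebra_simps linner_commute)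

lemma dmul_zero: "dmul a (0,0) = (0,0)" "dmul a 0 = 0"
  by (auto simp: dmul_def zero_prod_def)

theorem theorem3p1:
  fixes I J :: "real set"
    and \<alpha> T N B :: "real \<Rightarrow> dvec" and \<kappa> \<tau> :: "real \<Rightarrow> dual"
    and \<beta> V1 V2 V3 :: "real \<Rightarrow> dvec" and P Q :: "real \<Rightarrow> dual"
    and sstar :: "real \<Rightarrow> dual" and lam :: "real \<Rightarrow> dual"
  assumes I: "open I" "connected I"
    and J: "open J"
    \<comment> \<open>dual timelike curve \<alpha> parametrized by dual arc length s, with Frenet frame\<close>
    and alpha_T: "\<And>s. s \<in> I \<Longrightarrow> (\<alpha> has_vector_derivative T s) (at s)"
    and frameA: "\<And>s. s \<in> I \<Longrightarrow> dinner (T s) (T s) = (-1, 0) \<and> dinner (N s) (N s) = (1, 0)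
                 \<and> dinner (B s) (B s) = (1, 0) \<and> dinner (T s) (N s) = (0, 0)
                 \<and> dinner (T s) (B s) = (0, 0) \<and> dinner (N s) (B s) = (0, 0)"
    and frenetA: "\<And>s. s \<in> I \<Longrightarrow>
                 (T has_vector_derivative dscale (\<kappa> s) (N s)) (at s)
               \<and> (N has_vector_derivative dscale (\<kappa> s) (T s) + dscale (\<tau> s) (B s)) (at s)
               \<and> (B has_vector_derivative - dscale (\<tau> s) (N s)) (at s)"
    \<comment> \<open>dual spacelike curve \<beta> with dual timelike binormal, parametrized by dual arc length s*\<close>
    and beta_V1: "\<And>u. u \<in> J \<Longrightarrow> (\<beta> has_vector_derivative V1 u) (at u)"
    and frameB: "\<And>u. u \<in> J \<Longrightarrow> dinner (V1 u) (V1 u) = (1, 0) \<and> dinner (V2 u) (V2 u) = (1, 0)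
                 \<and> dinner (V3 u) (V3 u) = (-1, 0) \<and> dinner (V1 u) (V2 u) = (0, 0)
                 \<and> dinner (V1 u) (V3 u) = (0, 0) \<and> dinner (V2 u) (V3 u) = (0, 0)"
    and frenetB: "\<And>u. u \<in> J \<Longrightarrow>
                 (V1 has_vector_derivative dscale (P u) (V2 u)) (at u)
               \<and> (V2 has_vector_derivative - dscale (P u) (V1 u) + dscale (Q u) (V3 u)) (at u)
               \<and> (V3 has_vector_derivative dscale (Q u) (V2 u)) (at u)"
    \<comment> \<open>correspondence s \<mapsto> s* (dual-valued, differentiable)\<close>
    and corr: "\<And>s. s \<in> I \<Longrightarrow> fst (sstar s) \<in> J \<and> sstar differentiable (at s)"
    \<comment> \<open>Mannheim pair: beta(s*) = alpha(s) + lambda(s) B(s), and B(s) lies on the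
        dual principal normal line of beta at s*\<close>
    and mannheim: "\<And>s. s \<in> I \<Longrightarrow> dext \<beta> (sstar s) = \<alpha> s + dscale (lam s) (B s)"
    and lines: "\<And>s. s \<in> I \<Longrightarrow> \<exists>\<mu>. B s = dscale \<mu> (dext V2 (sstar s))"
  shows "\<exists>c. \<forall>s\<in>I. dnorm (dext \<beta> (sstar s) - \<alpha> s) = c"

proof -
  define F where "F s = dext \<beta> (sstar s) - \<alpha> s" for s
  have bpos: "(\<lambda>u. fst (\<beta> u)) = (\<lambda>u. fst (\<beta> u))" by simp
  have vdb: "vector_derivative (\<lambda>u. fst (\<beta> u)) (at u) = fst (V1 u)" if "u \<in> J" for u
    by (rule vector_derivative_at, rule bounded_linear.has_vector_derivative[OF bounded_linear_fst beta_V1[OF that]])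
  have vd1: "vector_derivative (\<lambda>u. fst (V1 u)) (at u) = fst (P u) *\<^sub>R fst (V2 u)" if "u \<in> J" for u
    using bounded_linear.has_vector_derivative[OF bounded_linear_fst conjunct1[OF frenetB[OF that]]]
    by (simp add: vector_derivative_at dscale_def)
  have vd2: "vector_derivative (\<lambda>u. fst (V2 u)) (at u) = - (fst (P u) *\<^sub>R fst (V1 u)) + fst (Q u) *\<^sub>R fst (V3 u)" if "u \<in> J" for u
    using bounded_linear.has_vector_derivative[OF bounded_linear_fst conjunct1[OF conjunct2[OF frenetB[OF that]]]]
    by (simp add: vector_derivative_at dscale_def)
  have XW: "dinner (dext V1 (sstar s)) (dext V2 (sstar s)) = (0,0)" if "s \<in> I" for s
  proof -
    define r where "r = fst (sstar s)"
    have rJ: "r \<in> J" using corr[OF that] r_def by simp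
    note fB = frameB[OF rJ]
    have e1: "linner (fst (V1 r)) (fst (V2 r)) = 0" and
         e2: "linner (fst (V1 r)) (snd (V2 r)) + linner (snd (V1 r)) (fst (V2 r)) = 0" and
         e3: "linner (fst (V1 r)) (fst (V1 r)) = 1" and e4: "linner (fst (V2 r)) (fst (V2 r)) = 1"
         and e5: "linner (fst (V1 r)) (fst (V3 r)) = 0" and e6: "linner (fst (V2 r)) (fst (V3 r)) = 0"
      using fB by (auto simp: dinner_def)
    show ?thesis
      unfolding dext_def r_def[symmetric] vd1[OF rJ] vd2[OF rJ]
      using e1 e2 e3 e4 e5 e6
      by (simp add: dinner_def linner_simps linner_commute[of "fst (V2 r)" "fst (V1 r)"] algebra_simps)
  qed
  have derH: "((\<lambda>s. dinner (F s) (B s)) has_vector_derivative 0) (at s)" if sI: "s \<in> I" for s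
  proof -
    define \<sigma>' where "\<sigma>' = vector_derivative sstar (at s)"
    have sd: "(sstar has_vector_derivative \<sigma>') (at s)"
      using corr[OF sI] by (simp add: vector_derivative_works \<sigma>'_def)
    define r where "r = fst (sstar s)"
    define d where "d = snd (sstar s)"
    have rJ: "r \<in> J" using corr[OF sI] r_def by simp
    have rd: "((\<lambda>x. fst (sstar x)) has_vector_derivative fst \<sigma>') (at s)"
      by (rule bounded_linear.has_vector_derivative[OF bounded_linear_fst sd])
    have dd: "((\<lambda>x. snd (sstar x)) has_vector_derivative snd \<sigma>') (at s)"
      by (rule bounded_linear.has_vector_derivative[OF bounded_linear_snd sd])
    have c1: "((\<lambda>x. fst (\<beta> (fst (sstar x)))) has_vector_derivative fst \<sigma>' *\<^sub>R fst (V1 r)) (at s)"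
      using vector_diff_chain_at[OF rd bounded_linear.has_vector_derivative[OF bounded_linear_fst beta_V1[OF rJ[unfolded r_def]]]]
      by (simp add: o_def r_def)
    have c2: "((\<lambda>x. snd (\<beta> (fst (sstar x)))) has_vector_derivative fst \<sigma>' *\<^sub>R snd (V1 r)) (at s)"
      using vector_diff_chain_at[OF rd bounded_linear.has_vector_derivative[OF bounded_linear_snd beta_V1[OF rJ[unfolded r_def]]]]
      by (simp add: o_def r_def)
    have c3: "((\<lambda>x. fst (V1 (fst (sstar x)))) has_vector_derivative fst \<sigma>' *\<^sub>R (fst (P r) *\<^sub>R fst (V2 r))) (at s)"
      using vector_diff_chain_at[OF rd bounded_linear.has_vector_derivative[OF bounded_linear_fst conjunct1[OF frenetB[OF rJ[unfolded r_def]]]]]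
      by (simp add: o_def r_def dscale_def)
    define G' where "G' = (fst \<sigma>' *\<^sub>R fst (V1 r),
        fst \<sigma>' *\<^sub>R snd (V1 r) + (d *\<^sub>R (fst \<sigma>' *\<^sub>R (fst (P r) *\<^sub>R fst (V2 r))) + snd \<sigma>' *\<^sub>R fst (V1 r)))"
    have G2: "((\<lambda>x. (fst (\<beta> (fst (sstar x))), snd (\<beta> (fst (sstar x))) + snd (sstar x) *\<^sub>R fst (V1 (fst (sstar x)))))
               has_vector_derivative G') (at s)"
      unfolding G'_def d_def r_def
      by (intro has_vector_derivative_Pair has_vector_derivative_add has_vector_derivative_scaleR c1[unfolded r_def] c2[unfolded r_def] c3[unfolded r_def]
           dd[unfolded has_real_derivative_iff_has_vector_derivative[symmetric]])
    have G: "((\<lambda>x. dext \<beta> (sstar x)) has_vector_derivative G') (at s)"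
    proof (rule has_vector_derivative_transform_within_open[OF G2 I(1) sI])
      fix y assume "y \<in> I"
      then show "(fst (\<beta> (fst (sstar y))), snd (\<beta> (fst (sstar y))) + snd (sstar y) *\<^sub>R fst (V1 (fst (sstar y)))) = dext \<beta> (sstar y)"
        using vdb corr by (simp add: dext_def)
    qed
    have Fd: "(F has_vector_derivative G' - T s) (at s)"
      unfolding F_def[abs_def] by (intro has_vector_derivative_diff G alpha_T sI)
    have Bd: "(B has_vector_derivative - dscale (\<tau> s) (N s)) (at s)" using frenetA[OF sI] by simp
    have HD: "((\<lambda>s. dinner (F s) (B s)) has_vector_derivative
       dinner (F s) (- dscale (\<tau> s) (N s)) + dinner (G' - T s) (B s)) (at s)"
      by (rule bounded_bilinear.has_vector_derivative[OF bb_dinner Fd Bd])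
    have G'eq: "G' = dscale \<sigma>' (dext V1 (sstar s))"
      unfolding G'_def dscale_def dext_def vd1[OF rJ] r_def[symmetric] d_def[symmetric]
      by (simp add: algebra_simps)
    obtain \<mu> where mu: "B s = dscale \<mu> (dext V2 (sstar s))" using lines[OF sI] by blast
    have Fs: "F s = dscale (lam s) (B s)" using mannheim[OF sI] by (simp add: F_def)
    have z1: "dinner (B s) (N s) = (0,0)" "dinner (T s) (B s) = (0,0)" using frameA[OF sI] by (auto simp: dinner_def linner_commute)
    have "dinner (F s) (- dscale (\<tau> s) (N s)) = 0"
      unfolding Fs dinner_dscale_left dinner_minus_right dinner_dscale_right z1
      by (simp add: dmul_zero zero_prod_def)
    moreover have "dinner (G' - T s) (B s) = 0"
      unfolding dinner_diff_left z1 G'eq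
      apply (subst mu) unfolding dinner_dscale_left dinner_dscale_right XW[OF sI]
      by (simp add: dmul_zero zero_prod_def)
    ultimately show ?thesis using HD by simp
  qed
  have "(\<lambda>s. dinner (F s) (B s)) constant_on I"
  proof (rule has_derivative_zero_connected_constant_on[where K="{}"])
    show "connected I" "open I" "finite {}" by (simp_all add: I)
    show "continuous_on I (\<lambda>s. dinner (F s) (B s))"
      using derH by (meson continuous_at_imp_continuous_on has_vector_derivative_continuous)
    show "\<forall>x\<in>I - {}. ((\<lambda>s. dinner (F s) (B s)) has_derivative (\<lambda>h. 0)) (at x within I)"
      using derH by (auto simp: has_vector_derivative_def intro: has_derivative_at_withinI)
  qed
  then obtain c where c: "\<And>s. s \<in> I \<Longrightarrow> dinner (F s) (B s) = c" by (auto simp: constant_on_def)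
  have lamc: "lam s = c" if sI: "s \<in> I" for s
  proof -
    have Fs: "F s = dscale (lam s) (B s)" using mannheim[OF sI] by (simp add: F_def)
    have "dinner (B s) (B s) = (1,0)" using frameA[OF sI] by auto
    then show ?thesis using c[OF sI] unfolding Fs dinner_dscale_left by (simp add: dmul_def)
  qed
  show ?thesis
  proof (intro exI ballI)
    fix s assume sI: "s \<in> I"
    have Fs: "F s = dscale c (B s)" using mannheim[OF sI] lamc[OF sI] by (simp add: F_def)
    have b1: "linner (fst (B s)) (fst (B s)) = 1" and b2: "linner (fst (B s)) (snd (B s)) = 0"
      using frameA[OF sI] by (auto simp: dinner_def linner_commute[of "snd (B s)"])
    have "dnorm (F s) = (\<bar>fst c\<bar>, fst c * snd c / \<bar>fst c\<bar>)"
      unfolding Fs dnorm_def dscale_def lnorm_def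
      by (simp add: linner_simps b1 b2 power2_eq_square[symmetric] algebra_simps)
    then show "dnorm (dext \<beta> (sstar s) - \<alpha> s) = (\<bar>fst c\<bar>, fst c * snd c / \<bar>fst c\<bar>)"
      by (simp add: F_def)
  qed
qed

end
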